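(* The code $\mathcal C_3(\mathbb D_d)$ is contained in the ternary fourth-order (extended) generalized Reed–Muller code $\mathcal R_3(4,2m)$.
   Context: Let $m\ge 2$ be an integer. For $s\in\{m,2m\}$ let $\mathrm{Tr}_s:\mathbb F_{3^s}\to\mathbb F_3$ denote the absolute trace. Vectors in $\mathbb F_3^{3^{2m}}$ are indexed by $\mathbb F_{3^{2m}}$, and a function $f:\mathbb F_{3^{2m}}\to\mathbb F_3$ is identified with $(f(t))_{t\in\mathbb F_{3^{2m}}}$. Let $\mathcal C(2m,3)=\{(\mathrm{Tr}_{2m}(at^{3^m+1}+bt)+h)_{t\in\mathbb F_{3^{2m}}}: a\in\mathbb F_{3^m}, b\in\mathbb F_{3^{2m}}, h\in\mathbb F_3\}$, let $d$ be its minimum nonzero Hamming weight, let $\mathbb D_d$ be the incidence structure on $\mathbb F_{3^{2m}}$ whose blocks are the supports of the weight-$d$ codewords, and let $\mathcal C_3(\mathbb D_d)$ be the $\mathbb F_3$-span of the incidence vectors of the blocks. Fix an $\mathbb F_3$-basis of $\mathbb F_{3^{2m}}$, identifying $\mathbb F_{3^{2m}}$ with $\mathbb F_3^{2m}$; $\mathcal R_3(r,2m)$ denotes the set of functions $\mathbb F_3^{2m}\to\mathbb F_3$ given by polynomials over $\mathbb F_3$ in $2m$ variables of total degree at most $r$ (equivalently, the extension by an overall parity check of the punctured generalized Reed–Muller code of order $r$ over $\mathbb F_3$ of length $3^{2m}-1$). *)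

theory Defs
  imports Main
begin

text \<open>We work inside a finite field 'a of order 3^(2m). The prime field F_3 is
  realised as the subfield {x. x^3 = x}, and F_{3^m} as {x. x^(3^m) = x}.
  Codewords (vectors indexed by F_{3^{2m}} over F_3) are functions 'a => 'a
  with values in F_3.\<close>

definition F3 :: "'a::field set" where
  "F3 = {x. x ^ 3 = x}"

definition subF :: "nat \<Rightarrow> 'a::field set" where
  "subF s = {x. x ^ (3 ^ s) = x}"

definition Tr :: "nat \<Rightarrow> 'a::field \<Rightarrow> 'a" where
  "Tr s x = (\<Sum>i<s. x ^ (3 ^ i))"

definition codeC :: "nat \<Rightarrow> ('a::field \<Rightarrow> 'a) set" where
  "codeC m = {(\<lambda>t. Tr (2*m) (a * t ^ (3 ^ m + 1) + b * t) + h) | a b h.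
               a \<in> subF m \<and> h \<in> F3}"

definition supp :: "('a \<Rightarrow> 'b::zero) \<Rightarrow> 'a set" where
  "supp f = {t. f t \<noteq> 0}"

definition wt :: "('a \<Rightarrow> 'b::zero) \<Rightarrow> nat" where
  "wt f = card (supp f)"

definition min_wt :: "('a \<Rightarrow> 'b::zero) set \<Rightarrow> nat" where
  "min_wt C = Min {wt c | c. c \<in> C \<and> c \<noteq> (\<lambda>_. 0)}"

definition blocks :: "('a \<Rightarrow> 'b::zero) set \<Rightarrow> 'a set set" where
  "blocks C = {supp c | c. c \<in> C \<and> wt c = min_wt C}"

definition incidence :: "'a set \<Rightarrow> 'a \<Rightarrow> 'b::field" where
  "incidence B t = (if t \<in> B then 1 else 0)"

definition design_code :: "'a set set \<Rightarrow> ('a \<Rightarrow> 'b::field) set" where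
  "design_code Bs = {(\<lambda>t. \<Sum>B\<in>Bs. k B * incidence B t) | k. \<forall>B. k B \<in> F3}"

definition is_F3_basis :: "nat \<Rightarrow> (nat \<Rightarrow> 'a::field) \<Rightarrow> bool" where
  "is_F3_basis n \<beta> \<longleftrightarrow> (\<forall>t. \<exists>!c. (\<forall>i<n. c i \<in> F3) \<and> (\<forall>i\<ge>n. c i = 0)
                                  \<and> t = (\<Sum>i<n. c i * \<beta> i))"

definition monomials_deg :: "nat \<Rightarrow> nat \<Rightarrow> (nat \<Rightarrow> nat) set" where
  "monomials_deg n r = {e. (\<forall>i\<ge>n. e i = 0) \<and> (\<Sum>i<n. e i) \<le> r}"

definition RM :: "nat \<Rightarrow> nat \<Rightarrow> (nat \<Rightarrow> 'a::field) \<Rightarrow> ('a \<Rightarrow> 'a) set" where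
  "RM r n \<beta> = {f. \<exists>P. (\<forall>e. P e \<in> F3) \<and>
      (\<forall>c. (\<forall>i<n. c i \<in> F3) \<longrightarrow>
         f (\<Sum>i<n. c i * \<beta> i) = (\<Sum>e\<in>monomials_deg n r. P e * (\<Prod>i<n. c i ^ e i)))}"

end

theory Submission imports Defs begin

lemma card_zero:
  fixes x :: "'a::{field,finite}"
  shows "of_nat (card (UNIV::'a set)) = (0::'a)"
proof -
  have b: "bij_betw (\<lambda>y::'a. y + 1) UNIV UNIV"
    by (rule bij_betw_byWitness[where f'="\<lambda>y. y - 1"]) auto
  have "(\<Sum>y\<in>UNIV. y) = (\<Sum>y\<in>UNIV. (y::'a) + 1)"
    using sum.reindex_bij_betw[OF b, of "\<lambda>y. y"] by simp
  also have "\<dots> = (\<Sum>y\<in>UNIV. y) + of_nat (card (UNIV::'a set))"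
    by (simp add: sum.distrib)
  finally show ?thesis by simp
qed

lemma fermat:
  fixes x :: "'a::{field,finite}"
  shows "x ^ card (UNIV::'a set) = x"
proof (cases "x = 0")
  case True then show ?thesis by (simp add: finite_UNIV_card_ge_0 power_0_left)
next
  case False
  let ?U = "UNIV - {0::'a}"
  have b: "bij_betw (\<lambda>y::'a. x * y) ?U ?U"
    by (rule bij_betw_byWitness[where f'="\<lambda>y. y / x"]) (use False in auto)
  have "(\<Prod>y\<in>?U. y) = (\<Prod>y\<in>?U. x * y)"
    using prod.reindex_bij_betw[OF b, of "\<lambda>y. y"] by simp
  also have "\<dots> = x ^ card ?U * (\<Prod>y\<in>?U. y)"
    by (simp add: prod.distrib)
  finally have "x ^ card ?U = 1"
    by (simp add: prod_zero_iff)
  moreover have cu: "card (UNIV::'a set) = Suc (card ?U)"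
  proof -
    have "card ?U = card (UNIV::'a set) - 1" by (simp add: card_Diff_singleton)
    moreover have "card (UNIV::'a set) > 0" by (simp add: finite_UNIV_card_ge_0)
    ultimately show ?thesis by linarith
  qed
  ultimately show ?thesis by (simp only: cu power_Suc mult_1_right)
qed

lemma char3:
  assumes "card (UNIV :: 'a::{field,finite} set) = 3 ^ N"
  shows "(3::'a) = 0"
proof -
  have "(of_nat (3^N) :: 'a) = 0" using card_zero[where 'a='a] assms by simp
  then have "(3::'a) ^ N = 0" by simp
  then show ?thesis by simp
qed

lemma frob3:
  fixes x y :: "'a::field"
  assumes "(3::'a) = 0"
  shows "(x + y) ^ 3 = x ^ 3 + y ^ 3"
proof -
  have "(x+y)^3 = x^3+y^3 + 3*(x^2*y + x*y^2)"
    by (simp add: algebra_simps power2_eq_square power3_eq_cube)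
  then show ?thesis using assms by simp
qed

lemma frob:
  fixes x y :: "'a::field"
  assumes "(3::'a) = 0"
  shows "(x + y) ^ (3^k) = x ^ (3^k) + y ^ (3^k)"
proof (induction k arbitrary: x y)
  case 0 then show ?case by simp
next
  case (Suc k)
  have "(x + y) ^ (3^Suc k) = ((x+y)^3)^(3^k)" by (simp add: power_mult)
  also have "\<dots> = (x^3)^(3^k) + (y^3)^(3^k)" using frob3[OF assms] Suc by simp
  finally show ?case by (simp add: power_mult)
qed

lemma frob_sum:
  fixes f :: "'b \<Rightarrow> 'a::field"
  assumes "(3::'a) = 0" "finite X"
  shows "(\<Sum>x\<in>X. f x) ^ (3^k) = (\<Sum>x\<in>X. f x ^ (3^k))"
  using assms(2) by (induction X rule: finite_induct) (simp_all add: frob[OF assms(1)])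

lemma F3_pow: "(x::'a::field) \<in> F3 \<Longrightarrow> x ^ (3^k) = x"
proof (induction k)
  case 0 then show ?case by simp
next
  case (Suc k)
  have "x ^ (3^Suc k) = (x^3)^(3^k)" by (simp add: power_mult)
  then show ?case using Suc by (simp add: F3_def)
qed

lemma F3_add: "(3::'a::field) = 0 \<Longrightarrow> x \<in> F3 \<Longrightarrow> y \<in> F3 \<Longrightarrow> x + y \<in> (F3::'a set)"
  by (simp add: F3_def frob3)

lemma F3_mult: "x \<in> F3 \<Longrightarrow> y \<in> F3 \<Longrightarrow> x * y \<in> (F3::'a::field set)"
  by (simp add: F3_def power_mult_distrib)

lemma F3_01: "0 \<in> (F3::'a::field set)" "1 \<in> (F3::'a::field set)"
  by (simp_all add: F3_def)

lemma F3_sq: "x \<in> (F3::'a::field set) \<Longrightarrow> x * x = (if x = 0 then 0 else 1)"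
proof -
  assume "x \<in> F3"
  then have "x * (x * x - 1) = 0" by (simp add: F3_def algebra_simps power3_eq_cube)
  then show ?thesis by auto
qed

lemma Tr_sum: "(3::'a::field) = 0 \<Longrightarrow> finite X \<Longrightarrow> Tr N (\<Sum>x\<in>X. f x) = (\<Sum>x\<in>X. Tr N (f x :: 'a))"
  unfolding Tr_def by (simp add: frob_sum sum.swap[of _ "{..<N}"])

lemma Tr_scal: "k \<in> F3 \<Longrightarrow> Tr N (x * k) = Tr N x * (k::'a::field)"
  unfolding Tr_def by (simp add: power_mult_distrib F3_pow sum_distrib_right)

lemma Tr_F3:
  assumes "(3::'a::field) = 0" "(x::'a) ^ (3^N) = x"
  shows "Tr N x \<in> F3"
proof -
  have "(Tr N x)^(3^1) = (\<Sum>i<N. (x ^ 3^i)^(3^1))"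
    unfolding Tr_def by (rule frob_sum[OF assms(1)]) simp
  also have "\<dots> = (\<Sum>i<N. x ^ 3^(Suc i))"
    by (rule sum.cong) (simp_all only: power_Suc2 power_mult power_one_right)
  also have "\<dots> = (\<Sum>i<N. x ^ 3^i)"
  proof -
    have "(\<Sum>i<Suc N. x ^ 3^i) = x + (\<Sum>i<N. x ^ 3^(Suc i))"
      by (subst sum.lessThan_Suc_shift) simp
    moreover have "(\<Sum>i<Suc N. x ^ 3^i) = (\<Sum>i<N. x ^ 3^i) + x" using assms(2) by simp
    ultimately show ?thesis by simp
  qed
  finally show ?thesis by (simp add: F3_def Tr_def)
qed


definition mnm :: "nat \<Rightarrow> (nat \<Rightarrow> nat) \<Rightarrow> (nat \<Rightarrow> 'a) \<Rightarrow> 'a::field" where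
  "mnm n e c = (\<Prod>i<n. c i ^ e i)"

definition polyS :: "'a::field set \<Rightarrow> nat \<Rightarrow> nat \<Rightarrow> ((nat \<Rightarrow> 'a) \<Rightarrow> 'a) \<Rightarrow> bool" where
  "polyS S n r g \<longleftrightarrow> (\<exists>P. (\<forall>e. P e \<in> S) \<and> (\<forall>c. (\<forall>i<n. c i \<in> F3) \<longrightarrow>
      g c = (\<Sum>e\<in>monomials_deg n r. P e * mnm n e c)))"

definition goodS :: "'a::field set \<Rightarrow> bool" where
  "goodS S \<longleftrightarrow> 0 \<in> S \<and> 1 \<in> S \<and> (\<forall>x\<in>S. \<forall>y\<in>S. x + y \<in> S \<and> x * y \<in> S)"

lemma goodS_UNIV: "goodS UNIV" by (simp add: goodS_def)
lemma goodS_F3: "(3::'a::field) = 0 \<Longrightarrow> goodS (F3::'a set)"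
  by (simp add: goodS_def F3_01 F3_add F3_mult)

lemma finite_mon: "finite (monomials_deg n r)"
proof -
  have "monomials_deg n r \<subseteq> {f. \<forall>x. (x \<in> {..<n} \<longrightarrow> f x \<in> {..r}) \<and> (x \<notin> {..<n} \<longrightarrow> f x = 0)}"
  proof
    fix e assume e: "e \<in> monomials_deg n r"
    have "\<forall>x<n. e x \<le> r"
    proof (intro allI impI)
      fix x assume "x < n"
      then have "e x \<le> (\<Sum>i<n. e i)" by (intro member_le_sum) auto
      then show "e x \<le> r" using e by (simp add: monomials_deg_def)
    qed
    then show "e \<in> {f. \<forall>x. (x \<in> {..<n} \<longrightarrow> f x \<in> {..r}) \<and> (x \<notin> {..<n} \<longrightarrow> f x = 0)}"
      using e by (auto simp: monomials_deg_def)
  qed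
  then show ?thesis by (rule finite_subset) (intro finite_set_of_finite_funs; simp)
qed

lemma F3_pw: "x \<in> F3 \<Longrightarrow> x ^ k \<in> (F3::'a::field set)"
  unfolding F3_def by (simp, metis power_mult mult.commute)

lemma F3_prod: "\<forall>x\<in>X. f x \<in> F3 \<Longrightarrow> prod f X \<in> (F3::'a::field set)"
  unfolding F3_def by (simp add: prod_power_distrib)

lemma mnm_F3: "\<forall>i<n. c i \<in> F3 \<Longrightarrow> mnm n e c \<in> (F3::'a::field set)"
  unfolding mnm_def by (intro F3_prod) (auto intro: F3_pw)

lemma polyS_cong: "polyS S n r g \<Longrightarrow> (\<And>c. \<forall>i<n. c i \<in> F3 \<Longrightarrow> g c = h c) \<Longrightarrow> polyS S n r h"
  unfolding polyS_def by metis

lemma polyS_zero: "goodS S \<Longrightarrow> polyS S n r (\<lambda>c. 0)"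
  unfolding polyS_def goodS_def by (intro exI[of _ "\<lambda>e. 0"]) simp

lemma polyS_mon: assumes "goodS S" "e0 \<in> monomials_deg n r" shows "polyS S n r (mnm n e0)"
  unfolding polyS_def
proof (intro exI[of _ "\<lambda>e. if e = e0 then 1 else 0"] conjI allI impI)
  fix e show "(if e = e0 then 1 else 0) \<in> S" using assms(1) by (simp add: goodS_def)
next
  fix c :: "nat \<Rightarrow> 'a"
  have "(\<Sum>e\<in>monomials_deg n r. (if e = e0 then 1 else 0) * mnm n e c)
      = (\<Sum>e\<in>monomials_deg n r. (if e = e0 then mnm n e c else 0))"
    by (rule sum.cong) auto
  also have "\<dots> = mnm n e0 c" using assms(2) by (simp add: finite_mon)
  finally show "mnm n e0 c = (\<Sum>e\<in>monomials_deg n r. (if e = e0 then 1 else 0) * mnm n e c)" by simp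
qed

lemma polyS_scal: "goodS S \<Longrightarrow> k \<in> S \<Longrightarrow> polyS S n r g \<Longrightarrow> polyS S n r (\<lambda>c. k * g c)"
  unfolding polyS_def goodS_def
  apply (elim exE conjE)
  subgoal for P by (intro exI[of _ "\<lambda>e. k * P e"]) (simp add: sum_distrib_left mult.assoc)
  done

lemma polyS_add: "goodS S \<Longrightarrow> polyS S n r g \<Longrightarrow> polyS S n r h \<Longrightarrow> polyS S n r (\<lambda>c. g c + h c)"
  unfolding polyS_def goodS_def
  apply (elim exE conjE)
  subgoal for P Q by (intro exI[of _ "\<lambda>e. P e + Q e"]) (simp add: sum.distrib distrib_right)
  done

lemma polyS_lift: assumes "r \<le> r'" "goodS S" "polyS S n r g" shows "polyS S n r' g"
proof -
  obtain P where P: "\<forall>e. P e \<in> S" "\<forall>c. (\<forall>i<n. c i \<in> F3) \<longrightarrow> g c = (\<Sum>e\<in>monomials_deg n r. P e * mnm n e c)"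
    using assms(3) unfolding polyS_def by blast
  show ?thesis unfolding polyS_def
  proof (intro exI[of _ "\<lambda>e. if e \<in> monomials_deg n r then P e else 0"] conjI allI impI)
    fix e show "(if e \<in> monomials_deg n r then P e else 0) \<in> S"
      using assms(2) P(1) by (simp add: goodS_def)
  next
    fix c :: "nat \<Rightarrow> 'a" assume c: "\<forall>i<n. c i \<in> F3"
    have i: "monomials_deg n r' \<inter> monomials_deg n r = monomials_deg n r"
      using assms(1) by (auto simp: monomials_deg_def)
    have "(\<Sum>e\<in>monomials_deg n r'. (if e \<in> monomials_deg n r then P e else 0) * mnm n e c)
       = (\<Sum>e\<in>monomials_deg n r'. (if e \<in> monomials_deg n r then P e * mnm n e c else 0))"
      by (rule sum.cong) auto
    also have "\<dots> = (\<Sum>e\<in>monomials_deg n r. P e * mnm n e c)"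
      by (simp only: sum.inter_restrict[OF finite_mon, symmetric] i)
    finally show "g c = (\<Sum>e\<in>monomials_deg n r'. (if e \<in> monomials_deg n r then P e else 0) * mnm n e c)"
      using P(2) c by simp
  qed
qed

lemma polyS_sum: assumes "goodS S" "finite X" "\<And>x. x \<in> X \<Longrightarrow> polyS S n r (G x)" shows "polyS S n r (\<lambda>c. \<Sum>x\<in>X. G x c)"
  using assms(2,3)
proof (induction X rule: finite_induct)
  case empty then show ?case using polyS_zero[OF assms(1)] by simp
next
  case (insert x F)
  then have "polyS S n r (\<lambda>c. G x c + (\<Sum>x\<in>F. G x c))" by (intro polyS_add[OF assms(1)]) auto
  then show ?case using insert by simp
qed

lemma mnm_add: "mnm n (\<lambda>i. e i + e' i) c = mnm n e c * mnm n e' c"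
  unfolding mnm_def by (simp add: power_add prod.distrib)

lemma polyS_mult: assumes "goodS S" "polyS S n r g" "polyS S n s h"
  shows "polyS S n (r + s) (\<lambda>c. g c * h c)"
proof -
  obtain P where P: "\<forall>e. P e \<in> S" "\<forall>c. (\<forall>i<n. c i \<in> F3) \<longrightarrow> g c = (\<Sum>e\<in>monomials_deg n r. P e * mnm n e c)"
    using assms(2) unfolding polyS_def by blast
  obtain Q where Q: "\<forall>e. Q e \<in> S" "\<forall>c. (\<forall>i<n. c i \<in> F3) \<longrightarrow> h c = (\<Sum>e\<in>monomials_deg n s. Q e * mnm n e c)"
    using assms(3) unfolding polyS_def by blast
  have "polyS S n (r+s) (\<lambda>c. \<Sum>e\<in>monomials_deg n r. \<Sum>e'\<in>monomials_deg n s. (P e * Q e') * mnm n (\<lambda>i. e i + e' i) c)"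
  proof (intro polyS_sum[OF assms(1) finite_mon] polyS_scal[OF assms(1)] polyS_mon[OF assms(1)])
    fix e e' assume "e \<in> monomials_deg n r" "e' \<in> monomials_deg n s"
    then show "(\<lambda>i. e i + e' i) \<in> monomials_deg n (r + s)"
      by (auto simp: monomials_deg_def sum.distrib)
    show "P e * Q e' \<in> S" using P Q assms(1) by (simp add: goodS_def)
  qed
  then show ?thesis
  proof (rule polyS_cong)
    fix c :: "nat \<Rightarrow> 'a" assume "\<forall>i<n. c i \<in> F3"
    then show "(\<Sum>e\<in>monomials_deg n r. \<Sum>e'\<in>monomials_deg n s. (P e * Q e') * mnm n (\<lambda>i. e i + e' i) c) = g c * h c"
      using P Q by (simp add: sum_product mnm_add mult_ac)
  qed
qed

lemma polyS_const: "goodS S \<Longrightarrow> k \<in> S \<Longrightarrow> polyS S n r (\<lambda>c. k)"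
proof -
  assume a: "goodS S" "k \<in> S"
  have "polyS S n r (\<lambda>c. k * mnm n (\<lambda>_. 0) c)"
    by (intro polyS_scal[OF a] polyS_mon[OF a(1)]) (simp add: monomials_deg_def)
  then show ?thesis by (simp add: mnm_def)
qed

lemma polyS_coord: "goodS S \<Longrightarrow> i < n \<Longrightarrow> polyS S n 1 (\<lambda>c. c i)"
proof -
  assume a: "goodS S" "i < n"
  have "polyS S n 1 (mnm n (\<lambda>j. if j = i then 1 else 0))"
    by (intro polyS_mon[OF a(1)]) (use a(2) in \<open>simp add: monomials_deg_def\<close>)
  then show ?thesis
    by (rule polyS_cong) (simp add: mnm_def if_distrib[of "\<lambda>x. _ ^ x"] a(2) cong: if_cong)
qed

lemma polyS_frob: assumes "(3::'a::field) = 0" "polyS (UNIV::'a set) n r g"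
  shows "polyS UNIV n r (\<lambda>c. g c ^ (3^k))"
proof -
  obtain P where P: "\<forall>c. (\<forall>i<n. c i \<in> F3) \<longrightarrow> g c = (\<Sum>e\<in>monomials_deg n r. P e * mnm n e c)"
    using assms(2) unfolding polyS_def by blast
  show ?thesis unfolding polyS_def
  proof (intro exI[of _ "\<lambda>e. P e ^ (3^k)"] conjI allI impI)
    fix c :: "nat \<Rightarrow> 'a" assume c: "\<forall>i<n. c i \<in> F3"
    then show "g c ^ (3^k) = (\<Sum>e\<in>monomials_deg n r. P e ^ (3^k) * mnm n e c)"
      using P by (simp add: frob_sum[OF assms(1) finite_mon] power_mult_distrib F3_pow mnm_F3)
  qed simp
qed

lemma polyS_Tr: assumes "(3::'a::field) = 0" "\<forall>x::'a. x ^ (3^N) = x" "polyS (UNIV::'a set) n r g"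
  shows "polyS F3 n r (\<lambda>c. Tr N (g c))"
proof -
  obtain P where P: "\<forall>c. (\<forall>i<n. c i \<in> F3) \<longrightarrow> g c = (\<Sum>e\<in>monomials_deg n r. P e * mnm n e c)"
    using assms(3) unfolding polyS_def by blast
  show ?thesis unfolding polyS_def
  proof (intro exI[of _ "\<lambda>e. Tr N (P e)"] conjI allI impI)
    fix c :: "nat \<Rightarrow> 'a" assume c: "\<forall>i<n. c i \<in> F3"
    then show "Tr N (g c) = (\<Sum>e\<in>monomials_deg n r. Tr N (P e) * mnm n e c)"
      using P by (simp add: Tr_sum[OF assms(1) finite_mon] Tr_scal mnm_F3)
  next
    fix e show "Tr N (P e) \<in> F3" using Tr_F3 assms(1,2) by blast
  qed
qed


lemma polyS_mult': "goodS S \<Longrightarrow> polyS S n r g \<Longrightarrow> polyS S n s h \<Longrightarrow> r + s = d \<Longrightarrow> polyS S n d (\<lambda>c. g c * h c)"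
  using polyS_mult by blast

lemma T_poly: "polyS (UNIV::'a::field set) n 1 (\<lambda>c. \<Sum>i<n. c i * \<beta> i)"
proof -
  have "polyS (UNIV::'a set) n 1 (\<lambda>c. \<Sum>i\<in>{..<n}. \<beta> i * c i)"
    by (intro polyS_sum goodS_UNIV polyS_scal polyS_coord) auto
  then show ?thesis by (simp add: mult.commute)
qed

lemma cw_poly:
  fixes \<beta> :: "nat \<Rightarrow> 'a::field"
  assumes t3: "(3::'a) = 0" and fe: "\<forall>x::'a. x ^ (3^(2*m)) = x"
    and h: "h \<in> F3"
  shows "polyS F3 (2*m) 2 (\<lambda>c. Tr (2*m) (a * (\<Sum>i<2*m. c i * \<beta> i) ^ (3 ^ m + 1) + b * (\<Sum>i<2*m. c i * \<beta> i)) + h)"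
proof -
  let ?T = "\<lambda>c. \<Sum>i<2*m. c i * \<beta> i"
  have T: "polyS UNIV (2*m) 1 ?T" by (rule T_poly)
  have "polyS UNIV (2*m) 2 (\<lambda>c. ?T c ^ (3^m) * ?T c)"
    by (rule polyS_mult'[OF goodS_UNIV polyS_frob[OF t3 T] T]) simp
  then have A: "polyS UNIV (2*m) 2 (\<lambda>c. a * (?T c ^ (3^m) * ?T c))"
    by (intro polyS_scal goodS_UNIV) simp_all
  have B: "polyS UNIV (2*m) 2 (\<lambda>c. b * ?T c)"
    by (intro polyS_lift[of 1 2] goodS_UNIV polyS_scal T) simp_all
  have "polyS UNIV (2*m) 2 (\<lambda>c. a * (?T c ^ (3^m) * ?T c) + b * ?T c)"
    by (intro polyS_add goodS_UNIV A B)
  then have "polyS UNIV (2*m) 2 (\<lambda>c. a * ?T c ^ (3 ^ m + 1) + b * ?T c)"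
    by (rule polyS_cong) (simp add: power_add)
  then have "polyS F3 (2*m) 2 (\<lambda>c. Tr (2*m) (a * ?T c ^ (3 ^ m + 1) + b * ?T c))"
    by (rule polyS_Tr[OF t3 fe])
  then show ?thesis
    by (intro polyS_add goodS_F3[OF t3] polyS_const h)
qed

lemma block_poly:
  fixes \<beta> :: "nat \<Rightarrow> 'a::field"
  assumes t3: "(3::'a) = 0" and fe: "\<forall>x::'a. x ^ (3^(2*m)) = x"
    and c0: "c0 \<in> codeC m"
  shows "polyS F3 (2*m) 4 (\<lambda>c. incidence (supp c0) (\<Sum>i<2*m. c i * \<beta> i) :: 'a)"
proof -
  obtain a b h where c0d: "c0 = (\<lambda>t. Tr (2*m) (a * t ^ (3 ^ m + 1) + b * t) + h)" and h: "h \<in> F3"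
    using c0 unfolding codeC_def by blast
  let ?G = "\<lambda>c. Tr (2*m) (a * (\<Sum>i<2*m. c i * \<beta> i) ^ (3 ^ m + 1) + b * (\<Sum>i<2*m. c i * \<beta> i)) + h"
  have G: "polyS F3 (2*m) 2 ?G" by (rule cw_poly[OF t3 fe h])
  have "polyS F3 (2*m) 4 (\<lambda>c. ?G c * ?G c)"
    by (rule polyS_mult'[OF goodS_F3[OF t3] G G]) simp
  then show ?thesis
  proof (rule polyS_cong)
    fix c :: "nat \<Rightarrow> 'a"
    have "?G c \<in> F3" by (intro F3_add[OF t3] Tr_F3[OF t3] h) (simp add: fe)
    then show "?G c * ?G c = incidence (supp c0) (\<Sum>i<2*m. c i * \<beta> i)"
      by (simp add: F3_sq incidence_def supp_def c0d)
  qed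
qed


theorem mainTheorem3:
  fixes m :: nat and \<beta> :: "nat \<Rightarrow> 'a::{field,finite}"
  assumes "m \<ge> 2"
    and "card (UNIV :: 'a set) = 3 ^ (2 * m)"
    and "is_F3_basis (2 * m) \<beta>"
  shows "design_code (blocks (codeC m :: ('a \<Rightarrow> 'a) set)) \<subseteq> RM 4 (2 * m) \<beta>"
proof
  fix f :: "'a \<Rightarrow> 'a" assume "f \<in> design_code (blocks (codeC m :: ('a \<Rightarrow> 'a) set))"
  then obtain k where fd: "f = (\<lambda>t. \<Sum>B\<in>blocks (codeC m :: ('a \<Rightarrow> 'a) set). k B * incidence B t)"
    and k: "\<forall>B. k B \<in> F3"
    unfolding design_code_def by blast
  have t3: "(3::'a) = 0" by (rule char3[OF assms(2)])
  have fe: "\<forall>x::'a. x ^ (3^(2*m)) = x" using fermat[where 'a='a] assms(2) by simp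
  have "polyS F3 (2*m) 4 (\<lambda>c. \<Sum>B\<in>blocks (codeC m :: ('a \<Rightarrow> 'a) set). k B * incidence B (\<Sum>i<2*m. c i * \<beta> i))"
  proof (intro polyS_sum goodS_F3[OF t3] polyS_scal)
    show "finite (blocks (codeC m :: ('a \<Rightarrow> 'a) set))" by simp
  next
    fix B assume "B \<in> blocks (codeC m :: ('a \<Rightarrow> 'a) set)"
    then obtain c0 where c0: "c0 \<in> codeC m" "B = supp c0" unfolding blocks_def by blast
    show "polyS F3 (2*m) 4 (\<lambda>c. incidence B (\<Sum>i<2*m. c i * \<beta> i) :: 'a)"
      unfolding c0(2) by (rule block_poly[OF t3 fe c0(1)])
    show "k B \<in> F3" using k by simp
  qed
  then show "f \<in> RM 4 (2 * m) \<beta>"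
    unfolding RM_def polyS_def mnm_def fd by simp
qed

end
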